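(* Let $K$ be a precubical set and $(\alpha,\beta)\in K_0\times K_0$. Any two execution paths in the same path-connected component of $\mathbb P^{top}_{\alpha,\beta}|K|^t_{reg}$ have the same $L_1$-arc length.
   Context: $\mathbf{Top}$: $\Delta$-generated spaces; $\mathbb P^{top}_{\alpha,\beta}X\subset\mathbf{TOP}([0,1],|X|)$ carries the $\Delta$-kelleyfication of the relative compact-open topology. Precubical sets: presheaves on the box category $\square$; $K_0$ vertices; $|K|_{geom}=\mathrm{colim}_{\square[n]\to K}[0,1]^n$; $|c|_{geom}:[0,1]^n\to|K|_{geom}$ for $c\in K_n$. A $d$-path of $[0,1]^n$ is a continuous map $[0,\ell]\to[0,1]^n$ nondecreasing in each coordinate, tame if its endpoints are in $\{0,1\}^n$; a $d$-path of $K$ is a Moore composition $(|c_1|_{geom}\circ\gamma_1)*\cdots*(|c_p|_{geom}\circ\gamma_p)$ of such, tame if the $\gamma_i$ can be chosen tame. Regular: constant on no interval $[a,b]$ with $a<b$. The $L_1$-arc length of a $d$-path $\gamma$ of $[0,1]^n$ between times $t\le t'$ is $\sum_i|\gamma_i(t')-\gamma_i(t)|$; for a $d$-path of $K$ the $L_1$-arc length is the sum over the pieces (well defined). $|K|^t_{reg}$ is the multipointed $d$-space with underlying space $|K|_{geom}$, states $K_0$, and execution paths the nonconstant tame regular $d$-paths $[0,1]\to|K|_{geom}$ between vertices; $\mathbb P^{top}_{\alpha,\beta}|K|^t_{reg}$ is the space of those from $\alpha$ to $\beta$. *)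

theory Defs
  imports "HOL-Analysis.Analysis" "HOL-Homology.Simplices"
begin

definition quotient_top :: "'a topology \<Rightarrow> ('a \<times> 'a) set \<Rightarrow> 'a set topology" where
  "quotient_top X r = topology (\<lambda>U. U \<subseteq> topspace X // r \<and> openin X (\<Union>U))"

definition cmaps :: "'a topology \<Rightarrow> 'b topology \<Rightarrow> ('a \<Rightarrow> 'b) set" where
  "cmaps X Y = {f. continuous_map X Y f \<and> f \<in> extensional (topspace X)}"

definition compact_open_top :: "'a topology \<Rightarrow> 'b topology \<Rightarrow> ('a \<Rightarrow> 'b) topology" where
  "compact_open_top X Y = topology_generated_by
     {{f \<in> cmaps X Y. f ` C \<subseteq> U} | C U. compactin X C \<and> openin Y U}"

definition delta_kelley :: "'a topology \<Rightarrow> 'a topology" where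
  "delta_kelley X = topology (\<lambda>U. U \<subseteq> topspace X \<and>
     (\<forall>p f. singular_simplex p X f \<longrightarrow>
        openin (subtopology (powertop_real UNIV) (standard_simplex p))
               {x \<in> standard_simplex p. f x \<in> U}))"

text \<open>A precubical set is given by sets of n-cubes K n and face maps d n i e : K n \<rightarrow> K (n-1),
  for 0-based coordinate index i < n and e = False/True standing for 0/1, satisfying the
  cubical identities.\<close>
definition precubical_set :: "(nat \<Rightarrow> 'a set) \<Rightarrow> (nat \<Rightarrow> nat \<Rightarrow> bool \<Rightarrow> 'a \<Rightarrow> 'a) \<Rightarrow> bool" where
  "precubical_set K d \<longleftrightarrow>
     (\<forall>n i e x. i < n \<and> x \<in> K n \<longrightarrow> d n i e x \<in> K (n - 1)) \<and>
     (\<forall>n i j a b x. i < j \<and> j < n \<and> x \<in> K n \<longrightarrow>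
        d (n - 1) i a (d n j b x) = d (n - 1) (j - 1) b (d n i a x))"

definition bval :: "bool \<Rightarrow> real" where
  "bval e = (if e then 1 else 0)"

definition cube_pts :: "nat \<Rightarrow> (nat \<Rightarrow> real) set" where
  "cube_pts n = {p \<in> PiE {..<n} (\<lambda>_. UNIV). \<forall>i<n. 0 \<le> p i \<and> p i \<le> 1}"

definition cube_top :: "nat \<Rightarrow> (nat \<Rightarrow> real) topology" where
  "cube_top n = subtopology (product_topology (\<lambda>_. euclideanreal) {..<n}) (cube_pts n)"

definition coface :: "nat \<Rightarrow> nat \<Rightarrow> bool \<Rightarrow> (nat \<Rightarrow> real) \<Rightarrow> (nat \<Rightarrow> real)" where
  "coface n i e p = (\<lambda>j. if j < i then p j else if j = i then bval e
                         else if j < n then p (j - 1) else undefined)"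

definition cells :: "(nat \<Rightarrow> 'a set) \<Rightarrow> (nat \<times> 'a) set" where
  "cells K = {(n, x). x \<in> K n}"

definition disj_cubes :: "(nat \<Rightarrow> 'a set) \<Rightarrow> ((nat \<times> 'a) \<times> (nat \<Rightarrow> real)) topology" where
  "disj_cubes K = sum_topology (\<lambda>c. cube_top (fst c)) (cells K)"

definition glue_rel :: "(nat \<Rightarrow> 'a set) \<Rightarrow> (nat \<Rightarrow> nat \<Rightarrow> bool \<Rightarrow> 'a \<Rightarrow> 'a)
    \<Rightarrow> (((nat \<times> 'a) \<times> (nat \<Rightarrow> real)) \<times> ((nat \<times> 'a) \<times> (nat \<Rightarrow> real))) set" where
  "glue_rel K d = {(((n - 1, d n i e x), p), ((n, x), coface n i e p)) | n i e x p.
                    i < n \<and> x \<in> K n \<and> p \<in> cube_pts (n - 1)}"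

definition glue_eq :: "(nat \<Rightarrow> 'a set) \<Rightarrow> (nat \<Rightarrow> nat \<Rightarrow> bool \<Rightarrow> 'a \<Rightarrow> 'a)
    \<Rightarrow> (((nat \<times> 'a) \<times> (nat \<Rightarrow> real)) \<times> ((nat \<times> 'a) \<times> (nat \<Rightarrow> real))) set" where
  "glue_eq K d = (glue_rel K d \<union> (glue_rel K d)\<inverse>)\<^sup>*"

definition geom_top :: "(nat \<Rightarrow> 'a set) \<Rightarrow> (nat \<Rightarrow> nat \<Rightarrow> bool \<Rightarrow> 'a \<Rightarrow> 'a)
    \<Rightarrow> ((nat \<times> 'a) \<times> (nat \<Rightarrow> real)) set topology" where
  "geom_top K d = quotient_top (disj_cubes K) (glue_eq K d)"

definition cell_map :: "(nat \<Rightarrow> 'a set) \<Rightarrow> (nat \<Rightarrow> nat \<Rightarrow> bool \<Rightarrow> 'a \<Rightarrow> 'a) \<Rightarrow> nat \<Rightarrow> 'a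
    \<Rightarrow> (nat \<Rightarrow> real) \<Rightarrow> ((nat \<times> 'a) \<times> (nat \<Rightarrow> real)) set" where
  "cell_map K d n c p = glue_eq K d `` {((n, c), p)}"

definition vertex_pt :: "(nat \<Rightarrow> 'a set) \<Rightarrow> (nat \<Rightarrow> nat \<Rightarrow> bool \<Rightarrow> 'a \<Rightarrow> 'a) \<Rightarrow> 'a
    \<Rightarrow> ((nat \<times> 'a) \<times> (nat \<Rightarrow> real)) set" where
  "vertex_pt K d a = cell_map K d 0 a (\<lambda>_. undefined)"

definition cube_dpath :: "nat \<Rightarrow> real \<Rightarrow> real \<Rightarrow> (real \<Rightarrow> (nat \<Rightarrow> real)) \<Rightarrow> bool" where
  "cube_dpath n a b g \<longleftrightarrow>
     continuous_map (top_of_set {a..b}) (cube_top n) g \<and>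
     (\<forall>i<n. mono_on {a..b} (\<lambda>t. g t i))"

definition cube_tame :: "nat \<Rightarrow> real \<Rightarrow> real \<Rightarrow> (real \<Rightarrow> (nat \<Rightarrow> real)) \<Rightarrow> bool" where
  "cube_tame n a b g \<longleftrightarrow> (\<forall>i<n. g a i \<in> {0, 1} \<and> g b i \<in> {0, 1})"

text \<open>A presentation of \<gamma> : [0,1] \<rightarrow> |K|_geom as a (Moore) composition
  (|c_1| o g_1) * ... * (|c_p| o g_p): the i-th piece lives on [ts i, ts (i+1)].\<close>
definition dpath_pres :: "bool \<Rightarrow> (nat \<Rightarrow> 'a set) \<Rightarrow> (nat \<Rightarrow> nat \<Rightarrow> bool \<Rightarrow> 'a \<Rightarrow> 'a)
    \<Rightarrow> (real \<Rightarrow> ((nat \<times> 'a) \<times> (nat \<Rightarrow> real)) set)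
    \<Rightarrow> nat \<Rightarrow> (nat \<Rightarrow> real) \<Rightarrow> (nat \<Rightarrow> nat \<times> 'a) \<Rightarrow> (nat \<Rightarrow> real \<Rightarrow> (nat \<Rightarrow> real)) \<Rightarrow> bool" where
  "dpath_pres tame K d \<gamma> p ts cs gs \<longleftrightarrow>
     1 \<le> p \<and> ts 0 = 0 \<and> ts p = 1 \<and> (\<forall>i<p. ts i < ts (Suc i)) \<and>
     (\<forall>i<p. cs i \<in> cells K \<and>
            cube_dpath (fst (cs i)) (ts i) (ts (Suc i)) (gs i) \<and>
            (tame \<longrightarrow> cube_tame (fst (cs i)) (ts i) (ts (Suc i)) (gs i)) \<and>
            (\<forall>t\<in>{ts i..ts (Suc i)}. \<gamma> t = cell_map K d (fst (cs i)) (snd (cs i)) (gs i t)))"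

definition dpath :: "bool \<Rightarrow> (nat \<Rightarrow> 'a set) \<Rightarrow> (nat \<Rightarrow> nat \<Rightarrow> bool \<Rightarrow> 'a \<Rightarrow> 'a)
    \<Rightarrow> (real \<Rightarrow> ((nat \<times> 'a) \<times> (nat \<Rightarrow> real)) set) \<Rightarrow> bool" where
  "dpath tame K d \<gamma> \<longleftrightarrow>
     continuous_map (top_of_set {0..1}) (geom_top K d) \<gamma> \<and>
     (\<exists>p ts cs gs. dpath_pres tame K d \<gamma> p ts cs gs)"

definition pres_L1_length :: "nat \<Rightarrow> (nat \<Rightarrow> real) \<Rightarrow> (nat \<Rightarrow> nat \<times> 'a)
    \<Rightarrow> (nat \<Rightarrow> real \<Rightarrow> (nat \<Rightarrow> real)) \<Rightarrow> real" where
  "pres_L1_length p ts cs gs =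
     (\<Sum>i<p. \<Sum>j<fst (cs i). \<bar>gs i (ts (Suc i)) j - gs i (ts i) j\<bar>)"

text \<open>L1-arc length of a d-path of K (well defined, i.e. independent of the presentation).\<close>
definition L1_length :: "(nat \<Rightarrow> 'a set) \<Rightarrow> (nat \<Rightarrow> nat \<Rightarrow> bool \<Rightarrow> 'a \<Rightarrow> 'a)
    \<Rightarrow> (real \<Rightarrow> ((nat \<times> 'a) \<times> (nat \<Rightarrow> real)) set) \<Rightarrow> real" where
  "L1_length K d \<gamma> = (THE l. \<exists>p ts cs gs. dpath_pres False K d \<gamma> p ts cs gs \<and>
                                            l = pres_L1_length p ts cs gs)"

definition regular_path :: "(real \<Rightarrow> 'b) \<Rightarrow> bool" where
  "regular_path \<gamma> \<longleftrightarrow> (\<forall>a b. 0 \<le> a \<and> a < b \<and> b \<le> 1 \<longrightarrow> \<not> (\<forall>t\<in>{a..b}. \<gamma> t = \<gamma> a))"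

definition exec_paths :: "(nat \<Rightarrow> 'a set) \<Rightarrow> (nat \<Rightarrow> nat \<Rightarrow> bool \<Rightarrow> 'a \<Rightarrow> 'a) \<Rightarrow> 'a \<Rightarrow> 'a
    \<Rightarrow> (real \<Rightarrow> ((nat \<times> 'a) \<times> (nat \<Rightarrow> real)) set) set" where
  "exec_paths K d \<alpha> \<beta> = {\<gamma> \<in> extensional {0..1}.
      dpath True K d \<gamma> \<and> regular_path \<gamma> \<and> (\<exists>s\<in>{0..1}. \<exists>t\<in>{0..1}. \<gamma> s \<noteq> \<gamma> t) \<and>
      \<gamma> 0 = vertex_pt K d \<alpha> \<and> \<gamma> 1 = vertex_pt K d \<beta>}"

definition Ptop :: "(nat \<Rightarrow> 'a set) \<Rightarrow> (nat \<Rightarrow> nat \<Rightarrow> bool \<Rightarrow> 'a \<Rightarrow> 'a) \<Rightarrow> 'a \<Rightarrow> 'a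
    \<Rightarrow> (real \<Rightarrow> ((nat \<times> 'a) \<times> (nat \<Rightarrow> real)) set) topology" where
  "Ptop K d \<alpha> \<beta> = delta_kelley (subtopology
      (compact_open_top (top_of_set {0..1}) (geom_top K d)) (exec_paths K d \<alpha> \<beta>))"

end

theory Submission
  imports Defs
begin


definition phi :: "((nat \<times> 'a) \<times> (nat \<Rightarrow> real)) \<Rightarrow> complex" where
  "phi x = exp (complex_of_real (2*pi * (\<Sum>j<fst (fst x). snd x j)) * \<i>)"

definition FF :: "((nat \<times> 'a) \<times> (nat \<Rightarrow> real)) set \<Rightarrow> complex" where
  "FF S = phi (SOME x. x \<in> S)"

lemma coface_sum:
  assumes "i < n" shows "(\<Sum>j<n. coface n i e p j) = bval e + (\<Sum>j<n-1. p j)"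
proof -
  obtain m where n: "n = Suc m" using assms by (cases n) auto
  have "{..<Suc m} = {..<i} \<union> {i} \<union> {Suc i..<Suc m}" using assms n by auto
  hence "(\<Sum>j<n. coface n i e p j) = sum (coface n i e p) ({..<i} \<union> {i} \<union> {Suc i..<Suc m})" using n by simp
  also have "\<dots> = sum (coface n i e p) ({..<i} \<union> {i}) + sum (coface n i e p) {Suc i..<Suc m}"
    by (rule sum.union_disjoint) auto
  also have "sum (coface n i e p) ({..<i} \<union> {i}) = (\<Sum>j<i. coface n i e p j) + coface n i e p i"
    by (subst sum.union_disjoint) auto
  also have "(\<Sum>j<i. coface n i e p j) = (\<Sum>j<i. p j)" by (simp add: coface_def)
  also have "(\<Sum>j=Suc i..<Suc m. coface n i e p j) = (\<Sum>j=Suc i..<Suc m. p (j - 1))"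
    by (rule sum.cong) (auto simp: coface_def n)
  also have "\<dots> = (\<Sum>j=i..<m. p j)" 
    using sum.shift_bounds_Suc_ivl[of "\<lambda>j. p (j - 1)" i m] by simp
  also have "coface n i e p i = bval e" by (simp add: coface_def)
  finally have "(\<Sum>j<n. coface n i e p j) = (\<Sum>j<i. p j) + bval e + (\<Sum>j=i..<m. p j)" .
  moreover have "(\<Sum>j<m. p j) = (\<Sum>j<i. p j) + (\<Sum>j=i..<m. p j)"
    using assms n by (metis atLeast0LessThan less_Suc_eq_le sum.atLeastLessThan_concat zero_le)
  ultimately show ?thesis using n by simp
qed

lemma phi_glue_rel: "(x, y) \<in> glue_rel K d \<Longrightarrow> phi x = phi y"
proof -
  assume "(x, y) \<in> glue_rel K d"
  then obtain n i e c p where x: "x = ((n - 1, d n i e c), p)" and y: "y = ((n, c), coface n i e p)"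
    and i: "i < n" unfolding glue_rel_def by blast
  have "phi y = exp (complex_of_real (2*pi*bval e) * \<i>) * phi x"
    unfolding x y phi_def using coface_sum[OF i, of e p]
    by (simp add: distrib_left exp_add[symmetric] algebra_simps)
  moreover have "exp (complex_of_real (2*pi*bval e) * \<i>) = 1"
    by (simp add: bval_def exp_eq_1)
  ultimately show ?thesis by simp
qed

lemma phi_glue_eq: "(x, y) \<in> glue_eq K d \<Longrightarrow> phi x = phi y"
  unfolding glue_eq_def
proof (induction rule: rtrancl_induct)
  case base then show ?case by simp
next
  case (step y z) then show ?case using phi_glue_rel[of y z K d] phi_glue_rel[of z y K d] by auto
qed

lemma FF_cell: "FF (glue_eq K d `` {x}) = phi x"
proof -
  have "x \<in> glue_eq K d `` {x}" by (simp add: glue_eq_def)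
  hence "(SOME y. y \<in> glue_eq K d `` {x}) \<in> glue_eq K d `` {x}" by (rule someI)
  thus ?thesis unfolding FF_def using phi_glue_eq by fastforce
qed

lemma cont_phi_cube: "continuous_map (cube_top n) euclidean (\<lambda>p. phi ((n, c), p))"
proof -
  have s: "continuous_map (cube_top n) euclideanreal (\<lambda>p. \<Sum>j<n. p j)"
  proof (rule continuous_map_sum)
    fix j assume "j \<in> {..<n}"
    thus "continuous_map (cube_top n) euclideanreal (\<lambda>p. p j)"
      unfolding cube_top_def
      by (intro continuous_map_from_subtopology continuous_map_product_projection) auto
  qed simp
  have e: "continuous_map euclideanreal euclidean (\<lambda>x::real. exp (complex_of_real (2*pi*x) * \<i>))"
    by (auto simp: continuous_map_iff_continuous2 intro!: continuous_intros)
  show ?thesis using continuous_map_compose[OF s e] unfolding phi_def by (simp add: o_def)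
qed

lemma cont_phi: "continuous_map (disj_cubes K) euclidean phi"
  unfolding continuous_map_def
proof (intro conjI allI impI)
  show "phi \<in> topspace (disj_cubes K) \<rightarrow> topspace euclidean" by simp
  fix W :: "complex set" assume W: "openin euclidean W"
  show "openin (disj_cubes K) {x \<in> topspace (disj_cubes K). phi x \<in> W}"
    unfolding disj_cubes_def openin_sum_topology
  proof (intro conjI ballI)
    fix c assume c: "c \<in> cells K"
    obtain n x where cx: "c = (n, x)" by fastforce
    have "openin (cube_top n) {p \<in> topspace (cube_top n). phi ((n,x),p) \<in> W}"
      using cont_phi_cube[of n x] W unfolding continuous_map_def by blast
    moreover have "{p. (c, p) \<in> {y \<in> topspace (sum_topology (\<lambda>c. cube_top (fst c)) (cells K)). phi y \<in> W}}
       = {p \<in> topspace (cube_top n). phi ((n,x),p) \<in> W}" using c cx by auto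
    ultimately show "openin (cube_top (fst c)) {p. (c, p) \<in> {y \<in> topspace (sum_topology (\<lambda>c. cube_top (fst c)) (cells K)). phi y \<in> W}}"
      using cx by simp
  qed auto
qed

lemma topspace_cube_top: "topspace (cube_top n) = cube_pts n"
  unfolding cube_top_def cube_pts_def by (auto simp: topspace_product_topology)

lemma coface_in: "i < n \<Longrightarrow> p \<in> cube_pts (n - 1) \<Longrightarrow> coface n i e p \<in> cube_pts n"
  unfolding cube_pts_def coface_def bval_def by (auto simp: PiE_def extensional_def)

lemma glue_rel_T:
  assumes "precubical_set K d" "(x, y) \<in> glue_rel K d"
  shows "x \<in> topspace (disj_cubes K) \<and> y \<in> topspace (disj_cubes K)"
proof -
  from assms(2) obtain n i e c p where x: "x = ((n - 1, d n i e c), p)" and y: "y = ((n, c), coface n i e p)"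
    and i: "i < n" and c: "c \<in> K n" and p: "p \<in> cube_pts (n - 1)" unfolding glue_rel_def by blast
  have "d n i e c \<in> K (n - 1)" using assms(1) i c unfolding precubical_set_def by blast
  thus ?thesis using x y c p coface_in[OF i p, of e]
    by (simp add: disj_cubes_def topspace_cube_top cells_def)
qed

lemma glue_eq_T:
  assumes "precubical_set K d" "(x, y) \<in> glue_eq K d" "x \<in> topspace (disj_cubes K)"
  shows "y \<in> topspace (disj_cubes K)"
  using assms(2,3) unfolding glue_eq_def
proof (induction rule: rtrancl_induct)
  case (step y z) then show ?case using glue_rel_T[OF assms(1), of y z] glue_rel_T[OF assms(1), of z y] by auto
qed simp

lemma equiv_glue: "equiv UNIV (glue_eq K d)"
  unfolding glue_eq_def equiv_def
  by (auto simp: refl_rtrancl sym_rtrancl sym_Un_converse trans_rtrancl)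

lemma istop_quot:
  assumes "equiv UNIV r"
  shows "istopology (\<lambda>U. U \<subseteq> T // r \<and> openin X (\<Union>U))"
  unfolding istopology_def
proof (rule conjI; intro allI impI)
  fix S V assume S: "S \<subseteq> T // r \<and> openin X (\<Union>S)" and V: "V \<subseteq> T // r \<and> openin X (\<Union>V)"
  have "\<Union>(S \<inter> V) = \<Union>S \<inter> \<Union>V"
  proof
    show "\<Union>S \<inter> \<Union>V \<subseteq> \<Union>(S \<inter> V)"
    proof
      fix z assume "z \<in> \<Union>S \<inter> \<Union>V"
      then obtain A B where A: "A \<in> S" "z \<in> A" and B: "B \<in> V" "z \<in> B" by blast
      have "A \<in> UNIV // r" "B \<in> UNIV // r" using A B S V by (auto simp: quotient_def)
      hence "A = B" using quotient_disj[OF assms] A B by blast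
      thus "z \<in> \<Union>(S \<inter> V)" using A B by blast
    qed
  qed blast
  thus "S \<inter> V \<subseteq> T // r \<and> openin X (\<Union>(S \<inter> V))" using S V by auto
next
  fix KK assume "\<forall>U\<in>KK. U \<subseteq> T // r \<and> openin X (\<Union>U)"
  moreover have "\<Union>(\<Union>KK) = \<Union>((\<lambda>U. \<Union>U) ` KK)" by auto
  moreover have "openin X (\<Union>((\<lambda>U. \<Union>U) ` KK))" using calculation(1) by (intro openin_Union) auto
  ultimately show "\<Union>KK \<subseteq> T // r \<and> openin X (\<Union>(\<Union>KK))"
    by auto
qed

lemma openin_geom: "openin (geom_top K d) U \<longleftrightarrow>
    U \<subseteq> topspace (disj_cubes K) // glue_eq K d \<and> openin (disj_cubes K) (\<Union>U)"
  unfolding geom_top_def quotient_top_def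
  using topology_inverse'[OF istop_quot[OF equiv_glue, of "topspace (disj_cubes K)" K d "disj_cubes K"]] by simp

lemma topspace_geom:
  assumes "precubical_set K d"
  shows "topspace (geom_top K d) = topspace (disj_cubes K) // glue_eq K d"
proof -
  let ?T = "topspace (disj_cubes K)"
  have "\<Union>(?T // glue_eq K d) = ?T"
  proof
    show "\<Union>(?T // glue_eq K d) \<subseteq> ?T" using glue_eq_T[OF assms] by (auto simp: quotient_def)
    show "?T \<subseteq> \<Union>(?T // glue_eq K d)"
    proof
      fix x assume "x \<in> ?T"
      moreover have "x \<in> glue_eq K d `` {x}" by (simp add: glue_eq_def)
      ultimately show "x \<in> \<Union>(?T // glue_eq K d)" by (auto simp: quotient_def)
    qed
  qed
  hence "openin (geom_top K d) (?T // glue_eq K d)" by (simp add: openin_geom)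
  hence "?T // glue_eq K d \<subseteq> topspace (geom_top K d)" by (rule openin_subset)
  moreover have "topspace (geom_top K d) \<subseteq> ?T // glue_eq K d"
    using openin_geom[of K d "topspace (geom_top K d)"] by simp
  ultimately show ?thesis by blast
qed

lemma cont_FF:
  assumes "precubical_set K d"
  shows "continuous_map (geom_top K d) euclidean FF"
  unfolding continuous_map_def
proof (intro conjI allI impI)
  show "FF \<in> topspace (geom_top K d) \<rightarrow> topspace euclidean" by simp
  fix W :: "complex set" assume W: "openin euclidean W"
  let ?T = "topspace (disj_cubes K)"
  let ?U = "{S \<in> topspace (geom_top K d). FF S \<in> W}"
  have "\<Union>?U = {x \<in> ?T. phi x \<in> W}"
  proof
    show "\<Union>?U \<subseteq> {x \<in> ?T. phi x \<in> W}"
    proof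
      fix x assume "x \<in> \<Union>?U"
      then obtain S where S: "S \<in> ?T // glue_eq K d" "FF S \<in> W" "x \<in> S" using topspace_geom[OF assms] by auto
      then obtain y where y: "y \<in> ?T" "S = glue_eq K d `` {y}" by (auto simp: quotient_def)
      have "(y, x) \<in> glue_eq K d" using y S by auto
      thus "x \<in> {x \<in> ?T. phi x \<in> W}" using glue_eq_T[OF assms] phi_glue_eq[of y x K d] S y FF_cell[of K d y]
        by auto
    qed
    show "{x \<in> ?T. phi x \<in> W} \<subseteq> \<Union>?U"
    proof
      fix x assume x: "x \<in> {x \<in> ?T. phi x \<in> W}"
      have "x \<in> glue_eq K d `` {x}" by (simp add: glue_eq_def)
      moreover have "glue_eq K d `` {x} \<in> ?U" using x FF_cell[of K d x] topspace_geom[OF assms]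
        by (auto simp: quotient_def)
      ultimately show "x \<in> \<Union>?U" by blast
    qed
  qed
  moreover have "openin (disj_cubes K) {x \<in> ?T. phi x \<in> W}"
    using cont_phi[of K] W unfolding continuous_map_def by blast
  ultimately show "openin (geom_top K d) ?U"
    unfolding openin_geom using topspace_geom[OF assms] by auto
qed



lemma exp1_sep:
  fixes a b :: complex
  assumes "exp a = 1" "exp b = 1" "a \<noteq> b"
  shows "2 * pi \<le> norm (b - a)"
proof -
  obtain n :: int where a: "Re a = 0" "Im a = of_int (2*n) * pi" using assms(1) exp_eq_1 by blast
  obtain m :: int where b: "Re b = 0" "Im b = of_int (2*m) * pi" using assms(2) exp_eq_1 by blast
  have "m \<noteq> n" using a b assms(3) complex_eq_iff by force
  hence "1 \<le> \<bar>of_int (m - n)::real\<bar>" by linarith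
  hence "2 * pi * 1 \<le> 2 * pi * \<bar>of_int (m - n)::real\<bar>" by (intro mult_left_mono) auto
  also have "\<dots> = \<bar>Im (b - a)\<bar>"
  proof -
    have "Im (b - a) = 2 * pi * of_int (m - n)" using a b by (simp add: algebra_simps)
    thus ?thesis by (simp add: abs_mult)
  qed
  also have "\<dots> \<le> norm (b - a)" by (rule abs_Im_le_cmod)
  finally show ?thesis by simp
qed

lemma exp1_const:
  fixes k :: "'a::topological_space \<Rightarrow> complex"
  assumes "connected S" "continuous_on S k" "\<And>x. x \<in> S \<Longrightarrow> exp (k x) = 1" "x \<in> S" "y \<in> S"
  shows "k x = k y"
proof -
  have "k constant_on S"
  proof (rule continuous_discrete_range_constant[OF assms(1,2)])
    fix x assume "x \<in> S"
    thus "\<exists>e>0. \<forall>y. y \<in> S \<and> k y \<noteq> k x \<longrightarrow> e \<le> norm (k y - k x)"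
      using exp1_sep assms(3) by (intro exI[of _ "2*pi"]) (auto simp: pi_gt_zero)
  qed
  thus ?thesis using assms(4,5) unfolding constant_on_def by metis
qed

lemma ts_mono:
  fixes ts :: "nat \<Rightarrow> real"
  assumes "\<forall>i<p. ts i < ts (Suc i)" "i \<le> j" "j \<le> p"
  shows "ts i \<le> ts j"
proof -
  have "\<forall>j. i \<le> j \<and> j \<le> p \<longrightarrow> ts i \<le> ts j" if "True"
  proof (intro allI impI)
    fix j assume "i \<le> j \<and> j \<le> p"
    then show "ts i \<le> ts j"
    proof (induction j)
      case 0 then show ?case by simp
    next
      case (Suc j)
      show ?case
      proof (cases "i = Suc j")
        case False
        hence "ts i \<le> ts j" using Suc by simp
        moreover have "ts j < ts (Suc j)" using assms(1) Suc.prems by simp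
        ultimately show ?thesis by simp
      qed simp
    qed
  qed
  thus ?thesis using assms by blast
qed

lemma cont_coord:
  assumes "cube_dpath n a b g" "j < n"
  shows "continuous_on {a..b} (\<lambda>t. g t j)"
proof -
  have "continuous_map (cube_top n) euclideanreal (\<lambda>p. p j)"
    unfolding cube_top_def using assms(2)
    by (intro continuous_map_from_subtopology continuous_map_product_projection) auto
  moreover have "continuous_map (top_of_set {a..b}) (cube_top n) g" using assms(1) unfolding cube_dpath_def by blast
  ultimately have "continuous_map (top_of_set {a..b}) euclideanreal ((\<lambda>p. p j) \<circ> g)"
    using continuous_map_compose by blast
  thus ?thesis by (simp add: o_def)
qed

lemma piece_len:
  assumes pres: "dpath_pres tm K d \<gamma> p ts cs gs" and i: "i < p"
    and g: "continuous_on {0..1} g" and lg: "\<And>t. t \<in> {0..1} \<Longrightarrow> FF (\<gamma> t) = exp (g t)"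
  shows "g (ts (Suc i)) - g (ts i) =
    complex_of_real (2*pi * (\<Sum>j<fst (cs i). \<bar>gs i (ts (Suc i)) j - gs i (ts i) j\<bar>)) * \<i>"
proof -
  let ?a = "ts i" and ?b = "ts (Suc i)" and ?n = "fst (cs i)" and ?c = "snd (cs i)"
  have tsinc: "\<forall>i<p. ts i < ts (Suc i)" and ts0: "ts 0 = 0" and tsp: "ts p = 1"
    using pres unfolding dpath_pres_def by auto
  have ab: "?a < ?b" using tsinc i by auto
  have a0: "0 \<le> ?a" using ts_mono[OF tsinc, of 0 i] i ts0 by simp
  have b1: "?b \<le> 1" using ts_mono[OF tsinc, of "Suc i" p] i tsp by simp
  have sub: "{?a..?b} \<subseteq> {0..1}" using a0 b1 by auto
  have dp: "cube_dpath ?n ?a ?b (gs i)" and eqg: "\<forall>t\<in>{?a..?b}. \<gamma> t = cell_map K d ?n ?c (gs i t)"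
    using pres i unfolding dpath_pres_def by auto
  define k where "k t = complex_of_real (2*pi * (\<Sum>j<?n. gs i t j)) * \<i> - g t" for t
  have kc: "continuous_on {?a..?b} k" unfolding k_def
    by (intro continuous_intros continuous_on_subset[OF g sub] cont_coord[OF dp]) auto
  have k1: "exp (k t) = 1" if t: "t \<in> {?a..?b}" for t
  proof -
    have "FF (\<gamma> t) = phi ((?n, ?c), gs i t)" using eqg t FF_cell unfolding cell_map_def by metis
    hence "exp (g t) = exp (complex_of_real (2*pi * (\<Sum>j<?n. gs i t j)) * \<i>)"
      using lg[of t] t sub unfolding phi_def by auto
    thus ?thesis unfolding k_def by (simp add: exp_diff)
  qed
  have "k ?a = k ?b" using exp1_const[OF _ kc k1] ab by auto
  hence "g ?b - g ?a = complex_of_real (2*pi * ((\<Sum>j<?n. gs i ?b j) - (\<Sum>j<?n. gs i ?a j))) * \<i>"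
    unfolding k_def by (simp add: algebra_simps)
  moreover have "(\<Sum>j<?n. gs i ?b j) - (\<Sum>j<?n. gs i ?a j) = (\<Sum>j<?n. \<bar>gs i ?b j - gs i ?a j\<bar>)"
  proof -
    have "gs i ?a j \<le> gs i ?b j" if "j < ?n" for j
      using dp that ab unfolding cube_dpath_def by (auto intro: mono_onD)
    thus ?thesis by (simp add: sum_subtractf[symmetric])
  qed
  ultimately show ?thesis by simp
qed

lemma pres_len:
  assumes pres: "dpath_pres tm K d \<gamma> p ts cs gs"
    and g: "continuous_on {0..1} g" and lg: "\<And>t. t \<in> {0..1} \<Longrightarrow> FF (\<gamma> t) = exp (g t)"
  shows "g 1 - g 0 = complex_of_real (2*pi * pres_L1_length p ts cs gs) * \<i>"
proof -
  have ts0: "ts 0 = 0" and tsp: "ts p = 1" using pres unfolding dpath_pres_def by auto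
  have "g 1 - g 0 = (\<Sum>i<p. g (ts (Suc i)) - g (ts i))"
    using sum_lessThan_telescope[of "\<lambda>i. g (ts i)" p] ts0 tsp by simp
  also have "\<dots> = (\<Sum>i<p. complex_of_real (2*pi * (\<Sum>j<fst (cs i). \<bar>gs i (ts (Suc i)) j - gs i (ts i) j\<bar>)) * \<i>)"
    by (rule sum.cong[OF refl]) (use piece_len[OF pres _ g lg] in auto)
  also have "\<dots> = complex_of_real (2*pi * pres_L1_length p ts cs gs) * \<i>"
    unfolding pres_L1_length_def by (simp add: sum_distrib_left sum_distrib_right)
  finally show ?thesis .
qed

lemma istop_dk:
  "istopology (\<lambda>U. U \<subseteq> topspace X \<and>
     (\<forall>p f. singular_simplex p X f \<longrightarrow>
        openin (subtopology (powertop_real UNIV) (standard_simplex p))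
               {x \<in> standard_simplex p. f x \<in> U}))"
  unfolding istopology_def
proof (rule conjI; intro allI impI)
  fix S T assume S: "S \<subseteq> topspace X \<and> (\<forall>p f. singular_simplex p X f \<longrightarrow>
        openin (subtopology (powertop_real UNIV) (standard_simplex p)) {x \<in> standard_simplex p. f x \<in> S})"
    and T: "T \<subseteq> topspace X \<and> (\<forall>p f. singular_simplex p X f \<longrightarrow>
        openin (subtopology (powertop_real UNIV) (standard_simplex p)) {x \<in> standard_simplex p. f x \<in> T})"
  show "S \<inter> T \<subseteq> topspace X \<and> (\<forall>p f. singular_simplex p X f \<longrightarrow>
        openin (subtopology (powertop_real UNIV) (standard_simplex p)) {x \<in> standard_simplex p. f x \<in> S \<inter> T})"
  proof (intro conjI allI impI)
    fix p f assume "singular_simplex p X f"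
    hence "openin (subtopology (powertop_real UNIV) (standard_simplex p))
       ({x \<in> standard_simplex p. f x \<in> S} \<inter> {x \<in> standard_simplex p. f x \<in> T})"
      using S T by (intro openin_Int) auto
    moreover have "{x \<in> standard_simplex p. f x \<in> S} \<inter> {x \<in> standard_simplex p. f x \<in> T}
       = {x \<in> standard_simplex p. f x \<in> S \<inter> T}" by auto
    ultimately show "openin (subtopology (powertop_real UNIV) (standard_simplex p)) {x \<in> standard_simplex p. f x \<in> S \<inter> T}"
      by simp
  qed (use S in auto)
next
  fix KK assume KK: "\<forall>S\<in>KK. S \<subseteq> topspace X \<and> (\<forall>p f. singular_simplex p X f \<longrightarrow>
        openin (subtopology (powertop_real UNIV) (standard_simplex p)) {x \<in> standard_simplex p. f x \<in> S})"
  show "\<Union>KK \<subseteq> topspace X \<and> (\<forall>p f. singular_simplex p X f \<longrightarrow>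
        openin (subtopology (powertop_real UNIV) (standard_simplex p)) {x \<in> standard_simplex p. f x \<in> \<Union>KK})"
  proof (intro conjI allI impI)
    fix p f assume "singular_simplex p X f"
    hence "openin (subtopology (powertop_real UNIV) (standard_simplex p))
       (\<Union>((\<lambda>S. {x \<in> standard_simplex p. f x \<in> S}) ` KK))"
      using KK by (intro openin_Union) auto
    moreover have "\<Union>((\<lambda>S. {x \<in> standard_simplex p. f x \<in> S}) ` KK) = {x \<in> standard_simplex p. f x \<in> \<Union>KK}" by auto
    ultimately show "openin (subtopology (powertop_real UNIV) (standard_simplex p)) {x \<in> standard_simplex p. f x \<in> \<Union>KK}"
      by simp
  qed (use KK in auto)
qed

lemma openin_dk:
  "openin (delta_kelley X) U \<longleftrightarrow> U \<subseteq> topspace X \<and>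
     (\<forall>p f. singular_simplex p X f \<longrightarrow>
        openin (subtopology (powertop_real UNIV) (standard_simplex p))
               {x \<in> standard_simplex p. f x \<in> U})"
  unfolding delta_kelley_def using topology_inverse'[OF istop_dk[of X]] by simp

lemma openin_dk_of: 
  assumes "openin X U" shows "openin (delta_kelley X) U"
  unfolding openin_dk
proof (intro conjI allI impI)
  show "U \<subseteq> topspace X" using assms by (rule openin_subset)
  fix p f assume "singular_simplex p X f"
  hence "continuous_map (subtopology (powertop_real UNIV) (standard_simplex p)) X f"
    unfolding singular_simplex_def by blast
  from openin_continuous_map_preimage[OF this assms]
  show "openin (subtopology (powertop_real UNIV) (standard_simplex p)) {x \<in> standard_simplex p. f x \<in> U}"
    by (simp add: topspace_product_topology)
qed

lemma topspace_dk: "topspace (delta_kelley X) = topspace X"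
proof
  show "topspace X \<subseteq> topspace (delta_kelley X)"
    using openin_subset[OF openin_dk_of[OF openin_topspace[of X]]] .
  show "topspace (delta_kelley X) \<subseteq> topspace X"
    using openin_dk[of X "topspace (delta_kelley X)"] by simp
qed

lemma cont_dk:
  assumes "continuous_map Z (delta_kelley X) h" shows "continuous_map Z X h"
  using assms unfolding continuous_map_def topspace_dk using openin_dk_of by blast

lemma topspace_CO: "topspace (compact_open_top X Y) \<subseteq> cmaps X Y"
  unfolding compact_open_top_def by auto

lemma openin_CO_basis:
  assumes "compactin X C" "openin Y U"
  shows "openin (compact_open_top X Y) {f \<in> cmaps X Y. f ` C \<subseteq> U}"
  unfolding compact_open_top_def openin_topology_generated_by_iff
  by (rule generate_topology_on.Basis) (use assms in blast)

lemma joint_cont: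
  fixes h :: "real \<Rightarrow> real \<Rightarrow> 'b" and Y :: "'b topology"
  assumes hc: "continuous_map (top_of_set {0..1}) (subtopology (compact_open_top (top_of_set {0..1}) Y) E) h"
  shows "continuous_map (top_of_set ({0..1}\<times>{0..1})) Y (\<lambda>z. h (fst z) (snd z))"
proof -
  have hcm: "h s \<in> cmaps (top_of_set {0..1}) Y" if "s \<in> {0..1}" for s
  proof -
    have "h s \<in> topspace (compact_open_top (top_of_set {0..1}) Y)"
      using hc that unfolding continuous_map_def by auto
    thus ?thesis using topspace_CO by blast
  qed
  have hs: "continuous_map (top_of_set {0..1}) Y (h s)" if "s \<in> {0..1}" for s
    using hcm[OF that] unfolding cmaps_def by blast
  show ?thesis
    unfolding continuous_map_def
  proof (intro conjI allI impI)
    show "(\<lambda>z. h (fst z) (snd z)) \<in> topspace (top_of_set ({0..1}\<times>{0..1})) \<rightarrow> topspace Y"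
      using hs unfolding continuous_map_def by (auto simp: Pi_def)
    fix U assume U: "openin Y U"
    let ?Q = "{0..1::real}\<times>{0..1::real}"
    show "openin (top_of_set ?Q) {z \<in> topspace (top_of_set ?Q). h (fst z) (snd z) \<in> U}"
      unfolding openin_subopen[of _ "{z \<in> topspace (top_of_set ?Q). h (fst z) (snd z) \<in> U}"]
    proof (intro ballI)
      fix z0 assume z0: "z0 \<in> {z \<in> topspace (top_of_set ?Q). h (fst z) (snd z) \<in> U}"
      obtain s0 t0 where z0e: "z0 = (s0, t0)" by fastforce
      have s0: "s0 \<in> {0..1}" and t0: "t0 \<in> {0..1}" and hU: "h s0 t0 \<in> U" using z0 z0e by auto
      have "openin (top_of_set {0..1}) {t \<in> {0..1}. h s0 t \<in> U}"
        using openin_continuous_map_preimage[OF hs[OF s0] U] by simp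
      then obtain e where e: "e > 0" "\<forall>t\<in>{0..1}. dist t t0 < e \<longrightarrow> h s0 t \<in> U"
        unfolding openin_euclidean_subtopology_iff using t0 hU by force
      define C where "C = {0..1::real} \<inter> cball t0 (e/2)"
      have Cc: "compactin (top_of_set {0..1}) C"
        unfolding compactin_subtopology C_def by (auto intro: compact_Int_closed)
      define B where "B = {f \<in> cmaps (top_of_set {0..1}) Y. f ` C \<subseteq> U}"
      have "openin (compact_open_top (top_of_set {0..1}) Y) B"
        unfolding B_def by (rule openin_CO_basis[OF Cc U])
      hence "openin (subtopology (compact_open_top (top_of_set {0..1}) Y) E) (B \<inter> E)"
        unfolding openin_subtopology by blast
      hence "openin (top_of_set {0..1}) {s \<in> {0..1}. h s \<in> B \<inter> E}"
        using openin_continuous_map_preimage[OF hc] by fastforce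
      moreover have "h s0 \<in> B \<inter> E"
      proof -
        have "h s0 \<in> E" using hc s0 unfolding continuous_map_def by auto
        moreover have "h s0 ` C \<subseteq> U" using e unfolding C_def by (auto simp: dist_commute)
        ultimately show ?thesis unfolding B_def using hcm[OF s0] by blast
      qed
      ultimately obtain dl where dl: "dl > 0" "\<forall>s\<in>{0..1}. dist s s0 < dl \<longrightarrow> h s \<in> B"
        unfolding openin_euclidean_subtopology_iff using s0 by force
      define T where "T = ?Q \<inter> ball z0 (min dl (e/2))"
      have "openin (top_of_set ?Q) T" unfolding T_def by (intro openin_open_Int) auto
      moreover have "z0 \<in> T" unfolding T_def using s0 t0 z0e dl e by auto
      moreover have "T \<subseteq> {z \<in> topspace (top_of_set ?Q). h (fst z) (snd z) \<in> U}"
      proof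
        fix z assume z: "z \<in> T"
        obtain s t where ze: "z = (s, t)" by fastforce
        have st: "s \<in> {0..1}" "t \<in> {0..1}" using z ze T_def by auto
        have dz: "dist z z0 < min dl (e/2)" using z T_def by (auto simp: dist_commute)
        have "dist s s0 < dl" using dz dist_fst_le[of z z0] ze z0e by auto
        hence "h s \<in> B" using dl st by blast
        moreover have "t \<in> C" using dz dist_snd_le[of z z0] ze z0e st unfolding C_def
          by (auto simp: dist_commute)
        ultimately show "z \<in> {z \<in> topspace (top_of_set ?Q). h (fst z) (snd z) \<in> U}"
          using ze st unfolding B_def by auto
      qed
      ultimately show "\<exists>T. openin (top_of_set ?Q) T \<and> z0 \<in> T \<and> T \<subseteq> {z \<in> topspace (top_of_set ?Q). h (fst z) (snd z) \<in> U}"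
        by blast
    qed
  qed
qed

lemma L1_eq:
  assumes "\<gamma> \<in> exec_paths K d \<alpha> \<beta>" "continuous_on {0..1} g" "\<And>t. t \<in> {0..1} \<Longrightarrow> FF (\<gamma> t) = exp (g t)"
  shows "complex_of_real (2*pi*L1_length K d \<gamma>) * \<i> = g 1 - g 0"
proof -
  obtain p ts cs gs where P: "dpath_pres True K d \<gamma> p ts cs gs"
    using assms(1) unfolding exec_paths_def dpath_def by blast
  hence P': "dpath_pres False K d \<gamma> p ts cs gs" unfolding dpath_pres_def by auto
  let ?l = "pres_L1_length p ts cs gs"
  have eq: "g 1 - g 0 = complex_of_real (2*pi * ?l) * \<i>" using pres_len[OF P' assms(2,3)] .
  have "L1_length K d \<gamma> = ?l"
    unfolding L1_length_def
  proof (rule the_equality)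
    show "\<exists>p' ts' cs' gs'. dpath_pres False K d \<gamma> p' ts' cs' gs' \<and> ?l = pres_L1_length p' ts' cs' gs'"
      using P' by blast
    fix l assume "\<exists>p' ts' cs' gs'. dpath_pres False K d \<gamma> p' ts' cs' gs' \<and> l = pres_L1_length p' ts' cs' gs'"
    then obtain p' ts' cs' gs' where Q: "dpath_pres False K d \<gamma> p' ts' cs' gs'" "l = pres_L1_length p' ts' cs' gs'"
      by blast
    have "g 1 - g 0 = complex_of_real (2*pi * l) * \<i>" using pres_len[OF Q(1) assms(2,3)] Q(2) by simp
    with eq have "complex_of_real (2*pi * l) = complex_of_real (2*pi * ?l)" by simp
    hence "2*pi * l = 2*pi * ?l" using of_real_eq_iff by blast
    thus "l = ?l" by simp
  qed
  thus ?thesis using eq by simp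
qed

lemma FF_vertex: "FF (vertex_pt K d a) = 1"
  unfolding vertex_pt_def cell_map_def FF_cell phi_def by simp

lemma FF_nz: "FF S \<noteq> 0"
  unfolding FF_def phi_def by simp

theorem proposition4p3:
  fixes K :: "nat \<Rightarrow> 'a set" and d :: "nat \<Rightarrow> nat \<Rightarrow> bool \<Rightarrow> 'a \<Rightarrow> 'a" and \<alpha> \<beta> :: 'a
    and \<gamma>1 \<gamma>2 :: "real \<Rightarrow> ((nat \<times> 'a) \<times> (nat \<Rightarrow> real)) set"
  assumes "precubical_set K d" and "\<alpha> \<in> K 0" and "\<beta> \<in> K 0"
    and "\<gamma>1 \<in> exec_paths K d \<alpha> \<beta>" and "\<gamma>2 \<in> exec_paths K d \<alpha> \<beta>"
    and "path_component_of (Ptop K d \<alpha> \<beta>) \<gamma>1 \<gamma>2"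
  shows "L1_length K d \<gamma>1 = L1_length K d \<gamma>2"
proof -
  have "\<exists>g. pathin (Ptop K d \<alpha> \<beta>) g \<and> g 0 = \<gamma>1 \<and> g 1 = \<gamma>2"
    using assms(6) by (simp only: path_component_of_def)
  then obtain H where H0: "pathin (Ptop K d \<alpha> \<beta>) H" and H23: "H 0 = \<gamma>1" "H 1 = \<gamma>2"
    by (elim exE conjE)
  have H: "continuous_map (top_of_set {0..1}) (Ptop K d \<alpha> \<beta>) H" "H 0 = \<gamma>1" "H 1 = \<gamma>2"
    using H0 H23 by (simp_all only: pathin_def)
  let ?E = "exec_paths K d \<alpha> \<beta>"
  have H2: "continuous_map (top_of_set {0..1}) (subtopology (compact_open_top (top_of_set {0..1}) (geom_top K d)) ?E) H"
    using H(1) unfolding Ptop_def by (rule cont_dk)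
  have HE: "H s \<in> ?E" if "s \<in> {0..1}" for s
    using H2 that unfolding continuous_map_def by auto
  let ?Q = "{0..1::real}\<times>{0..1::real}"
  have "continuous_map (top_of_set ?Q) euclidean (FF \<circ> (\<lambda>z. H (fst z) (snd z)))"
    using continuous_map_compose[OF joint_cont[OF H2] cont_FF[OF assms(1)]] .
  hence cQ: "continuous_on ?Q (\<lambda>z. FF (H (fst z) (snd z)))" by (simp add: o_def)
  obtain G where G: "continuous_on ?Q G" "\<And>z. z \<in> ?Q \<Longrightarrow> FF (H (fst z) (snd z)) = exp (G z)"
    using continuous_logarithm_on_contractible[OF cQ convex_imp_contractible[OF convex_Times[OF convex_real_interval(5) convex_real_interval(5)]] FF_nz]
    by blast
  have Gs: "continuous_on {0..1} (\<lambda>t. G (s, t))" if "s \<in> {0..1}" for s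
    by (rule continuous_on_compose2[OF G(1)]) (use that in \<open>auto intro!: continuous_intros\<close>)
  define D where "D s = G (s, 1) - G (s, 0)" for s
  have Dc: "continuous_on {0..1} D" unfolding D_def
    by (intro continuous_on_diff continuous_on_compose2[OF G(1)]) (auto intro!: continuous_intros)
  have D1: "exp (D s) = 1" if s: "s \<in> {0..1}" for s
  proof -
    have "H s 0 = vertex_pt K d \<alpha>" "H s 1 = vertex_pt K d \<beta>" using HE[OF s] unfolding exec_paths_def by auto
    moreover have "(s,0) \<in> ?Q" "(s,1) \<in> ?Q" using s by auto
    ultimately have "exp (G (s,0)) = 1" "exp (G (s,1)) = 1"
      using G(2)[of "(s,0)"] G(2)[of "(s,1)"] FF_vertex[of K d] by simp_all
    thus ?thesis unfolding D_def by (simp add: exp_diff)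
  qed
  have "D 0 = D 1" using exp1_const[OF _ Dc D1] by auto
  moreover have "complex_of_real (2*pi*L1_length K d \<gamma>1) * \<i> = D 0"
  proof -
    have "FF (\<gamma>1 t) = exp (G (0, t))" if "t \<in> {0..1}" for t
      using G(2)[of "(0,t)"] H(2) that by simp
    from L1_eq[OF assms(4) Gs this] show ?thesis unfolding D_def by simp
  qed
  moreover have "complex_of_real (2*pi*L1_length K d \<gamma>2) * \<i> = D 1"
  proof -
    have "FF (\<gamma>2 t) = exp (G (1, t))" if "t \<in> {0..1}" for t
      using G(2)[of "(1,t)"] H(3) that by simp
    from L1_eq[OF assms(5) Gs this] show ?thesis unfolding D_def by simp
  qed
  ultimately have "complex_of_real (2*pi*L1_length K d \<gamma>1) * \<i> = complex_of_real (2*pi*L1_length K d \<gamma>2) * \<i>"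
    by (simp only:)
  hence "complex_of_real (2*pi*L1_length K d \<gamma>1) = complex_of_real (2*pi*L1_length K d \<gamma>2)"
    by (metis complex_i_not_zero mult_cancel_right)
  hence "2*pi*L1_length K d \<gamma>1 = 2*pi*L1_length K d \<gamma>2" using of_real_eq_iff by blast
  thus ?thesis by simp
qed

end
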